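(* There exist absolute constants $0<c_1\le c_2$ and $\rho>0$ such that the following holds. Let $k\ge2$ be even and let $\delta\in\mathbb R^{k\times k}$, $\delta\neq0$, satisfy $\sum_{j\in[k]}\delta_{i_0j}=0$ and $\sum_{i\in[k]}\delta_{ij_0}=0$ for all $i_0,j_0\in[k]$. Let $X=(X_1,\dots,X_k)$ and $Y=(Y_1,\dots,Y_k)$ be independent, each uniformly distributed over the binary vectors in $\{0,1\}^k$ of Hamming weight $k/2$, and let $Z=\sum_{(i,j)\in[k]\times[k]}\delta_{ij}X_iY_j$. Then $$\Pr\Big[\frac{Z^2}{\|\delta\|_F^2}\in[c_1,c_2]\Big]\ge\rho .$$
   Context: $\|\delta\|_F^2=\sum_{i,j}\delta_{ij}^2$ is the squared Frobenius norm. *)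

theory Defs
  imports "HOL-Probability.Probability"
begin

text \<open>Indices [k] are rendered as {0..<k}. A binary vector in {0,1}^k is a function
  nat => real with values in {0,1} on {0..<k} and 0 outside (extensional, so the set is finite).\<close>

definition balanced_vecs :: "nat \<Rightarrow> (nat \<Rightarrow> real) set" where
  "balanced_vecs k = {x. (\<forall>i<k. x i \<in> {0, 1}) \<and> (\<forall>i. k \<le> i \<longrightarrow> x i = 0)
                        \<and> (\<Sum>i<k. x i) = real (k div 2)}"

definition frob_sq :: "nat \<Rightarrow> (nat \<Rightarrow> nat \<Rightarrow> real) \<Rightarrow> real" where
  "frob_sq k \<delta> = (\<Sum>i<k. \<Sum>j<k. (\<delta> i j)^2)"

definition bilin_Z :: "nat \<Rightarrow> (nat \<Rightarrow> nat \<Rightarrow> real) \<Rightarrow> (nat \<Rightarrow> real) \<Rightarrow> (nat \<Rightarrow> real) \<Rightarrow> real" where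
  "bilin_Z k \<delta> x y = (\<Sum>i<k. \<Sum>j<k. \<delta> i j * x i * y j)"

end

theory Submission
  imports Defs
begin


definition lin :: "nat \<Rightarrow> (nat\<Rightarrow>real) \<Rightarrow> (nat\<Rightarrow>real) \<Rightarrow> real" where
  "lin k a x = (\<Sum>i<k. a i * x i)"
definition sqn :: "nat \<Rightarrow> (nat\<Rightarrow>real) \<Rightarrow> real" where
  "sqn k a = (\<Sum>i<k. (a i)^2)"
definition swp :: "nat \<Rightarrow> nat \<Rightarrow> (nat\<Rightarrow>real) \<Rightarrow> (nat\<Rightarrow>real)" where
  "swp i j x = (\<lambda>l. if l = i then x j else if l = j then x i else x l)"

lemma swp_swp[simp]: "swp i j (swp i j x) = x"
  by (auto simp: swp_def fun_eq_iff)

lemma lin_swp: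
  assumes "i < k" "j < k"
  shows "lin k a (swp i j x) = lin k a x + (a i - a j) * (x j - x i)"
proof (cases "i = j")
  case True
  then have "swp i j x = x" by (auto simp: swp_def fun_eq_iff)
  then show ?thesis using True by simp
next
  case False
  have "lin k a (swp i j x) - lin k a x = (\<Sum>l<k. a l * (swp i j x l - x l))"
    by (simp add: lin_def sum_subtractf right_diff_distrib)
  also have "\<dots> = (\<Sum>l<k. (if l = i then a i * (x j - x i) else 0) + (if l = j then a j * (x i - x j) else 0))"
    by (rule sum.cong) (use False in \<open>auto simp: swp_def\<close>)
  also have "\<dots> = a i * (x j - x i) + a j * (x i - x j)"
    using assms by (simp add: sum.distrib)
  finally show ?thesis by (simp add: algebra_simps)
qed

lemma bal_memD:
  assumes "x \<in> balanced_vecs k"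
  shows "\<And>i. i < k \<Longrightarrow> x i = 0 \<or> x i = 1" "\<And>i. k \<le> i \<Longrightarrow> x i = 0" "(\<Sum>i<k. x i) = real (k div 2)"
  using assms by (auto simp: balanced_vecs_def)

lemma swp_mem:
  assumes "x \<in> balanced_vecs k" "i < k" "j < k"
  shows "swp i j x \<in> balanced_vecs k"
proof -
  have "(\<Sum>l<k. swp i j x l) = lin k (\<lambda>_. 1) (swp i j x)" by (simp add: lin_def)
  also have "\<dots> = (\<Sum>l<k. x l)" using lin_swp[OF assms(2,3), of "\<lambda>_. 1" x] by (simp add: lin_def)
  finally show ?thesis using assms unfolding balanced_vecs_def swp_def by auto
qed

lemma finite_bal: "finite (balanced_vecs k)"
proof -
  have "balanced_vecs k \<subseteq> (\<lambda>A. (\<lambda>i. if i \<in> A then 1 else 0)) ` Pow {..<k}"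
  proof
    fix x assume x: "x \<in> balanced_vecs k"
    have "x i = (if i \<in> {i. i < k \<and> x i = 1} then 1 else 0)" for i
      using bal_memD(1)[OF x, of i] bal_memD(2)[OF x, of i] by (cases "i < k") auto
    then have "x = (\<lambda>i. if i \<in> {i. i < k \<and> x i = 1} then 1 else 0)" by (rule ext)
    then show "x \<in> (\<lambda>A. (\<lambda>i. if i \<in> A then 1 else 0)) ` Pow {..<k}" by blast
  qed
  then show ?thesis by (rule finite_subset) auto
qed

lemma bal_ne: "balanced_vecs k \<noteq> {}"
proof -
  let ?x = "\<lambda>i. if i < k div 2 then 1 else (0::real)"
  have "(\<Sum>i<k. ?x i) = (\<Sum>i\<in>{..<k div 2}. 1)"
    by (rule sum.mono_neutral_cong_right) auto
  then have "?x \<in> balanced_vecs k" unfolding balanced_vecs_def by auto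
  then show ?thesis by blast
qed

lemma antisym_sum_zero:
  fixes F :: "'a \<Rightarrow> 'a \<Rightarrow> real"
  assumes "finite B" "\<And>x. x \<in> B \<Longrightarrow> \<sigma> x \<in> B" "\<And>x. x \<in> B \<Longrightarrow> \<sigma> (\<sigma> x) = x"
    and "\<And>u v. F u v = - F v u"
  shows "(\<Sum>x\<in>B. F x (\<sigma> x)) = 0"
proof -
  have "(\<Sum>x\<in>B. F x (\<sigma> x)) = (\<Sum>x\<in>B. F (\<sigma> x) (\<sigma> (\<sigma> x)))"
  proof -
    have inj: "inj_on \<sigma> B" by (rule inj_onI) (metis assms(3))
    have img: "\<sigma> ` B = B"
    proof
      show "\<sigma> ` B \<subseteq> B" using assms(2) by auto
      show "B \<subseteq> \<sigma> ` B"
      proof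
        fix x assume "x \<in> B"
        then have "x = \<sigma> (\<sigma> x)" "\<sigma> x \<in> B" using assms(2,3) by auto
        then show "x \<in> \<sigma> ` B" by blast
      qed
    qed
    have "(\<Sum>x\<in>B. F x (\<sigma> x)) = (\<Sum>x\<in>\<sigma> ` B. F x (\<sigma> x))" using img by simp
    also have "\<dots> = (\<Sum>x\<in>B. F (\<sigma> x) (\<sigma> (\<sigma> x)))" by (rule sum.reindex[OF inj, unfolded comp_def])
    finally show ?thesis .
  qed
  also have "\<dots> = (\<Sum>x\<in>B. - F x (\<sigma> x))"
  proof (rule sum.cong)
    fix x assume "x \<in> B"
    then show "F (\<sigma> x) (\<sigma> (\<sigma> x)) = - F x (\<sigma> x)"
      using assms(3)[of x] assms(4)[of "\<sigma> x" x] by simp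
  qed simp
  finally have "(\<Sum>x\<in>B. F x (\<sigma> x)) = (\<Sum>x\<in>B. - F x (\<sigma> x))" .
  moreover have "(\<Sum>x\<in>B. - F x (\<sigma> x)) = - (\<Sum>x\<in>B. F x (\<sigma> x))" by (simp add: sum_negf)
  ultimately show ?thesis by linarith
qed

lemma exch:
  assumes "i < k" "j < k"
  shows "(\<Sum>x\<in>balanced_vecs k. ((a i - a j) * (x j - x i)) *
     (g (lin k a x + (a i - a j) * (x j - x i)) + g (lin k a x))) = 0"
proof -
  have "(\<Sum>x\<in>balanced_vecs k. (lin k a (swp i j x) - lin k a x) * (g (lin k a (swp i j x)) + g (lin k a x))) = 0"
    by (rule antisym_sum_zero[where F="\<lambda>u v. (lin k a v - lin k a u) * (g (lin k a v) + g (lin k a u))"])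
      (use assms swp_mem finite_bal in \<open>auto simp: algebra_simps\<close>)
  then show ?thesis using lin_swp[OF assms] by simp
qed



lemma I1:
  assumes x: "x \<in> balanced_vecs k" and a0: "(\<Sum>i<k. a i) = 0"
  shows "(\<Sum>i<k. \<Sum>j<k. (a i - a j) * (x j - x i)) = - 2 * real k * lin k a x"
proof -
  have inner: "(\<Sum>j<k. (a i - a j) * (x j - x i)) =
      a i * (\<Sum>j<k. x j) + (- real k * (a i * x i)) + (- lin k a x) + x i * (\<Sum>j<k. a j)" for i
  proof -
    have "(\<Sum>j<k. (a i - a j) * (x j - x i)) = (\<Sum>j<k. a i * x j + (- (a i * x i)) + (- (a j * x j)) + x i * a j)"
      by (rule sum.cong) (auto simp: algebra_simps)
    also have "\<dots> = a i * (\<Sum>j<k. x j) + (- real k * (a i * x i)) + (- lin k a x) + x i * (\<Sum>j<k. a j)"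
      by (simp only: sum.distrib sum_distrib_left[symmetric] lin_def sum_negf) simp
    finally show ?thesis .
  qed
  have "(\<Sum>i<k. \<Sum>j<k. (a i - a j) * (x j - x i)) =
     (\<Sum>i<k. a i * (\<Sum>j<k. x j) + (- real k * (a i * x i)) + (- lin k a x) + x i * (\<Sum>j<k. a j))"
    using inner by simp
  also have "\<dots> = (\<Sum>i<k. a i) * (\<Sum>j<k. x j) + (- real k * lin k a x) + (- real k * lin k a x) + (\<Sum>i<k. x i) * (\<Sum>j<k. a j)"
    by (simp only: sum.distrib sum_distrib_left[symmetric] sum_distrib_right[symmetric] lin_def sum_negf) simp
  finally show ?thesis using a0 by simp
qed

lemma sq01: fixes x :: "nat \<Rightarrow> real" shows "x i = 0 \<or> x i = 1 \<Longrightarrow> x j = 0 \<or> x j = 1 \<Longrightarrow>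
   (x j - x i)^2 = x i + x j - 2 * x i * x j"
  by (auto simp: power2_eq_square)

lemma I2:
  assumes x: "x \<in> balanced_vecs k" and a0: "(\<Sum>i<k. a i) = 0" and ev: "even k"
  shows "(\<Sum>i<k. \<Sum>j<k. ((a i - a j) * (x j - x i))^2) = real k * sqn k a + 4 * (lin k a x)^2"
proof -
  define m where "m = real (k div 2)"
  have km: "real k = 2 * m" using ev unfolding m_def by (auto elim!: evenE)
  have sx: "(\<Sum>j<k. x j) = m" using bal_memD(3)[OF x] m_def by simp
  define A where "A = (\<Sum>j<k. (a j)^2 * x j)"
  define V where "V = lin k a x"
  define P where "P = sqn k a"
  have inner: "(\<Sum>j<k. ((a i - a j) * (x j - x i))^2) =
      real k * ((a i)^2 * x i) + m * (a i)^2 + (- 2 * m) * ((a i)^2 * x i) + (-2 * V) * a i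
       + (4 * V) * (a i * x i) + P * x i + A + (-2 * A) * x i" if i: "i < k" for i
  proof -
    have "(\<Sum>j<k. ((a i - a j) * (x j - x i))^2) =
      (\<Sum>j<k. ((a i)^2 * x i) * 1 + (a i)^2 * x j + (-2 * (a i)^2 * x i) * x j
       + (-2 * a i * x i) * a j + (-2 * a i) * (a j * x j) + (4 * a i * x i) * (a j * x j)
       + x i * (a j)^2 + 1 * ((a j)^2 * x j) + (-2 * x i) * ((a j)^2 * x j))"
    proof (rule sum.cong)
      fix j assume "j \<in> {..<k}"
      then have h: "(x j - x i)^2 = x i + x j - 2 * x i * x j"
        using sq01[of x i j] bal_memD(1)[OF x] i by auto
      show "((a i - a j) * (x j - x i))^2 = ((a i)^2 * x i) * 1 + (a i)^2 * x j + (-2 * (a i)^2 * x i) * x j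
       + (-2 * a i * x i) * a j + (-2 * a i) * (a j * x j) + (4 * a i * x i) * (a j * x j)
       + x i * (a j)^2 + 1 * ((a j)^2 * x j) + (-2 * x i) * ((a j)^2 * x j)"
      proof -
        have "((a i - a j) * (x j - x i))^2 = (a i - a j)^2 * (x j - x i)^2" by (simp add: power_mult_distrib)
        also have "\<dots> = (a i - a j)^2 * (x i + x j - 2 * x i * x j)" using h by simp
        finally show ?thesis by (simp add: algebra_simps power2_eq_square)
      qed
    qed simp
    also have "\<dots> = ((a i)^2 * x i) * (\<Sum>j<k. 1) + (a i)^2 * (\<Sum>j<k. x j) + (-2 * (a i)^2 * x i) * (\<Sum>j<k. x j)
       + (-2 * a i * x i) * (\<Sum>j<k. a j) + (-2 * a i) * (\<Sum>j<k. a j * x j) + (4 * a i * x i) * (\<Sum>j<k. a j * x j)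
       + x i * (\<Sum>j<k. (a j)^2) + 1 * (\<Sum>j<k. (a j)^2 * x j) + (-2 * x i) * (\<Sum>j<k. (a j)^2 * x j)"
      by (simp only: sum.distrib sum_distrib_left[symmetric])
    also have "\<dots> = real k * ((a i)^2 * x i) + m * (a i)^2 + (- 2 * m) * ((a i)^2 * x i) + (-2 * V) * a i
       + (4 * V) * (a i * x i) + P * x i + A + (-2 * A) * x i"
      unfolding sx a0 A_def[symmetric] V_def lin_def P_def sqn_def by (simp add: algebra_simps)
    finally show ?thesis .
  qed
  have "(\<Sum>i<k. \<Sum>j<k. ((a i - a j) * (x j - x i))^2) =
     (\<Sum>i<k. real k * ((a i)^2 * x i) + m * (a i)^2 + (- 2 * m) * ((a i)^2 * x i) + (-2 * V) * a i
       + (4 * V) * (a i * x i) + P * x i + A + (-2 * A) * x i)"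
    by (rule sum.cong) (use inner in auto)
  also have "\<dots> = real k * (\<Sum>i<k. (a i)^2 * x i) + m * (\<Sum>i<k. (a i)^2) + (- 2 * m) * (\<Sum>i<k. (a i)^2 * x i)
     + (-2 * V) * (\<Sum>i<k. a i) + (4 * V) * (\<Sum>i<k. a i * x i) + P * (\<Sum>i<k. x i) + (\<Sum>i<k. A)
     + (-2 * A) * (\<Sum>i<k. x i)"
    by (simp only: sum.distrib sum_distrib_left[symmetric])
  also have "\<dots> = real k * P + 4 * V^2"
    unfolding sx a0 A_def[symmetric] P_def[symmetric] sqn_def[symmetric] lin_def[symmetric] V_def[symmetric]
    using km by (simp add: algebra_simps power2_eq_square)
  finally show ?thesis unfolding V_def P_def .
qed



lemma swap3: "(\<Sum>i\<in>I. \<Sum>j\<in>J. \<Sum>x\<in>X. f i j x) = (\<Sum>x\<in>X. \<Sum>i\<in>I. \<Sum>j\<in>J. f i j x)"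
proof -
  have "(\<Sum>i\<in>I. \<Sum>j\<in>J. \<Sum>x\<in>X. f i j x) = (\<Sum>i\<in>I. \<Sum>x\<in>X. \<Sum>j\<in>J. f i j x)"
    by (rule sum.cong[OF refl]) (rule sum.swap)
  also have "\<dots> = (\<Sum>x\<in>X. \<Sum>i\<in>I. \<Sum>j\<in>J. f i j x)" by (rule sum.swap)
  finally show ?thesis .
qed

lemma exch_all:
  "(\<Sum>x\<in>balanced_vecs k. \<Sum>i<k. \<Sum>j<k. ((a i - a j) * (x j - x i)) *
     (g (lin k a x + (a i - a j) * (x j - x i)) + g (lin k a x))) = 0"
  (is "(\<Sum>x\<in>_. \<Sum>i<k. \<Sum>j<k. ?F i j x) = 0")
proof -
  have "(\<Sum>x\<in>balanced_vecs k. \<Sum>i<k. \<Sum>j<k. ?F i j x) = (\<Sum>i<k. \<Sum>j<k. \<Sum>x\<in>balanced_vecs k. ?F i j x)"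
    by (rule swap3[symmetric])
  also have "\<dots> = 0" by (simp add: exch)
  finally show ?thesis .
qed

lemma sumdiff2:
  assumes a0: "(\<Sum>i<k. a i) = 0"
  shows "(\<Sum>i<k. \<Sum>j<k. (a i - a j)^2) = 2 * real k * sqn k a"
proof -
  have "(\<Sum>i<k. \<Sum>j<k. (a i - a j)^2) = (\<Sum>i<k. \<Sum>j<k. (a i)^2 * 1 + (-2 * a i) * a j + 1 * (a j)^2)"
    by (rule sum.cong[OF refl], rule sum.cong[OF refl]) (simp add: power2_eq_square algebra_simps)
  also have "\<dots> = (\<Sum>i<k. (a i)^2 * (\<Sum>j<k. 1) + (-2 * a i) * (\<Sum>j<k. a j) + 1 * (\<Sum>j<k. (a j)^2))"
    by (simp only: sum.distrib sum_distrib_left[symmetric])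
  also have "\<dots> = (\<Sum>i<k. real k * (a i)^2 + sqn k a)"
    using a0 by (simp add: sqn_def mult.commute)
  also have "\<dots> = 2 * real k * sqn k a"
    by (simp add: sum.distrib sum_distrib_left[symmetric] sqn_def)
  finally show ?thesis .
qed

lemma quart: fixes u v :: real shows "(u - v)^4 \<le> 8 * u^4 + 8 * v^4"
proof -
  have e: "8 * u^4 + 8 * v^4 - (u - v)^4 = (u + v)^2 * (5 * (u - v)^2 + 2 * u^2 + 2 * v^2)"
    by algebra
  have "0 \<le> (u + v)^2 * (5 * (u - v)^2 + 2 * u^2 + 2 * v^2)" by simp
  then show ?thesis using e by linarith
qed

lemma sum4_le: "(\<Sum>i<k. (a i)^4) \<le> (sqn k a)^2"
proof -
  have "(\<Sum>i<k. (a i)^4) \<le> (\<Sum>i<k. (a i)^2 * sqn k a)"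
  proof (rule sum_mono)
    fix i assume "i \<in> {..<k}"
    then have "(a i)^2 \<le> sqn k a" unfolding sqn_def
      by (intro member_le_sum) auto
    then have h: "(a i)^2 * (a i)^2 \<le> (a i)^2 * sqn k a" by (rule mult_left_mono) simp
    have "(a i)^4 = (a i)^2 * (a i)^2" by algebra
    then show "(a i)^4 \<le> (a i)^2 * sqn k a" using h by simp
  qed
  also have "\<dots> = (sqn k a)^2" by (simp add: sum_distrib_right[symmetric] sqn_def power2_eq_square)
  finally show ?thesis .
qed

lemma sumdiff4:
  shows "(\<Sum>i<k. \<Sum>j<k. (a i - a j)^4) \<le> 16 * real k * (sqn k a)^2"
proof -
  have "(\<Sum>i<k. \<Sum>j<k. (a i - a j)^4) \<le> (\<Sum>i<k. \<Sum>j<k. 8 * (a i)^4 + 8 * (a j)^4)"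
  proof (intro sum_mono)
    fix i j
    have "(a i - a j)^4 \<le> 8 * (a i)^4 + 8 * (a j)^4" by (rule quart)
    then show "(a i - a j)^4 \<le> 8 * (a i)^4 + 8 * (a j)^4" .
  qed
  also have "\<dots> = 16 * real k * (\<Sum>i<k. (a i)^4)"
    by (simp add: sum.distrib sum_distrib_left[symmetric] algebra_simps)
  also have "\<dots> \<le> 16 * real k * (sqn k a)^2"
    using sum4_le by (intro mult_left_mono) auto
  finally show ?thesis .
qed



lemma sqn_nonneg: "0 \<le> sqn k a" unfolding sqn_def by (intro sum_nonneg) auto

lemma pt2:
  assumes x: "x \<in> balanced_vecs k" and a0: "(\<Sum>i<k. a i) = 0" and ev: "even k"
  shows "(\<Sum>i<k. \<Sum>j<k. ((a i - a j) * (x j - x i)) *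
     ((lin k a x + (a i - a j) * (x j - x i)) + lin k a x)) = real k * sqn k a - (4 * real k - 4) * (lin k a x)^2"
proof -
  define V where "V = lin k a x"
  have "(\<Sum>i<k. \<Sum>j<k. ((a i - a j) * (x j - x i)) * ((V + (a i - a j) * (x j - x i)) + V))
     = (\<Sum>i<k. \<Sum>j<k. (2 * V) * ((a i - a j) * (x j - x i)) + ((a i - a j) * (x j - x i))^2)"
    by (rule sum.cong[OF refl], rule sum.cong[OF refl]) (simp add: algebra_simps power2_eq_square)
  also have "\<dots> = (2 * V) * (\<Sum>i<k. \<Sum>j<k. (a i - a j) * (x j - x i)) + (\<Sum>i<k. \<Sum>j<k. ((a i - a j) * (x j - x i))^2)"
    by (simp only: sum.distrib sum_distrib_left[symmetric])
  also have "\<dots> = real k * sqn k a - (4 * real k - 4) * V^2"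
    unfolding I1[OF x a0] I2[OF x a0 ev] V_def by (simp add: algebra_simps power2_eq_square)
  finally show ?thesis unfolding V_def .
qed

lemma M2:
  assumes ev: "even k" and a0: "(\<Sum>i<k. a i) = 0"
  shows "(\<Sum>x\<in>balanced_vecs k. (lin k a x)^2) * (4 * real k - 4) = real (card (balanced_vecs k)) * (real k * sqn k a)"
proof -
  have "0 = (\<Sum>x\<in>balanced_vecs k. \<Sum>i<k. \<Sum>j<k. ((a i - a j) * (x j - x i)) *
     ((\<lambda>w. w) (lin k a x + (a i - a j) * (x j - x i)) + (\<lambda>w. w) (lin k a x)))"
    by (rule exch_all[symmetric])
  also have "\<dots> = (\<Sum>x\<in>balanced_vecs k. real k * sqn k a - (4 * real k - 4) * (lin k a x)^2)"
    by (rule sum.cong[OF refl], erule pt2[OF _ a0 ev])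
  also have "\<dots> = real (card (balanced_vecs k)) * (real k * sqn k a) - (4 * real k - 4) * (\<Sum>x\<in>balanced_vecs k. (lin k a x)^2)"
    by (simp add: sum_subtractf sum_distrib_left)
  finally show ?thesis by (simp add: algebra_simps)
qed

lemma M2le:
  assumes ev: "even k" and k2: "2 \<le> k" and a0: "(\<Sum>i<k. a i) = 0"
  shows "(\<Sum>x\<in>balanced_vecs k. (lin k a x)^2) \<le> real (card (balanced_vecs k)) * sqn k a / 2"
proof -
  let ?S = "(\<Sum>x\<in>balanced_vecs k. (lin k a x)^2)" and ?N = "real (card (balanced_vecs k))"
  have e: "?S * (4 * real k - 4) = ?N * (real k * sqn k a)" by (rule M2[OF ev a0])
  have "?N * (real k * sqn k a) \<le> ?N * ((2 * real k - 2) * sqn k a)"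
    using k2 sqn_nonneg[of k a] by (intro mult_left_mono) (auto intro: mult_right_mono)
  then have "?S * (4 * real k - 4) \<le> (?N * sqn k a / 2) * (4 * real k - 4)" using e by (simp add: algebra_simps)
  moreover have "0 < 4 * real k - 4" using k2 by simp
  ultimately show ?thesis by simp
qed

lemma pt4_one:
  fixes V D c :: real
  assumes "D^2 \<le> c"
  shows "D * ((V + D)^3 + V^3) \<le> 2 * V^3 * D + 9/2 * V^2 * c + 5/2 * c^2"
proof -
  have e: "D * ((V + D)^3 + V^3) = 2 * V^3 * D + 3 * V^2 * D^2 + 3 * V * D^3 + D^4" by algebra
  have "3 * V * D^3 \<le> 3/2 * D^2 * (V^2 + D^2)"
  proof -
    have "0 \<le> 3/2 * D^2 * (V - D)^2" by simp
    moreover have "3/2 * D^2 * (V - D)^2 = 3/2 * D^2 * (V^2 + D^2) - 3 * V * D^3" by algebra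
    ultimately show ?thesis by linarith
  qed
  then have "D * ((V + D)^3 + V^3) \<le> 2 * V^3 * D + 9/2 * V^2 * D^2 + 5/2 * (D^2)^2"
    using e by (simp add: algebra_simps power2_eq_square power3_eq_cube power4_eq_xxxx)
  also have "\<dots> \<le> 2 * V^3 * D + 9/2 * V^2 * c + 5/2 * c^2"
  proof -
    have "V^2 * D^2 \<le> V^2 * c" using assms by (intro mult_left_mono) auto
    moreover have "(D^2)^2 \<le> c^2" using assms by (intro power_mono) auto
    ultimately show ?thesis by linarith
  qed
  finally show ?thesis .
qed

lemma pt4:
  assumes x: "x \<in> balanced_vecs k" and a0: "(\<Sum>i<k. a i) = 0"
  shows "(\<Sum>i<k. \<Sum>j<k. ((a i - a j) * (x j - x i)) *
     ((lin k a x + (a i - a j) * (x j - x i))^3 + (lin k a x)^3))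
     \<le> - 4 * real k * (lin k a x)^4 + 9 * real k * sqn k a * (lin k a x)^2 + 40 * real k * (sqn k a)^2"
proof -
  define V where "V = lin k a x"
  have "(\<Sum>i<k. \<Sum>j<k. ((a i - a j) * (x j - x i)) * ((V + (a i - a j) * (x j - x i))^3 + V^3))
     \<le> (\<Sum>i<k. \<Sum>j<k. (2 * V^3) * ((a i - a j) * (x j - x i)) + (9/2 * V^2) * (a i - a j)^2 + 5/2 * ((a i - a j)^2)^2)"
  proof (intro sum_mono)
    fix i j assume i: "i \<in> {..<k}" and j: "j \<in> {..<k}"
    have "((a i - a j) * (x j - x i))^2 \<le> (a i - a j)^2"
    proof -
      have "(x j - x i)^2 \<le> 1" using bal_memD(1)[OF x, of i] bal_memD(1)[OF x, of j] i j by auto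
      then have "(a i - a j)^2 * (x j - x i)^2 \<le> (a i - a j)^2 * 1" by (intro mult_left_mono) auto
      then show ?thesis by (simp add: power_mult_distrib)
    qed
    from pt4_one[OF this, of V]
    show "((a i - a j) * (x j - x i)) * ((V + (a i - a j) * (x j - x i))^3 + V^3)
       \<le> (2 * V^3) * ((a i - a j) * (x j - x i)) + (9/2 * V^2) * (a i - a j)^2 + 5/2 * ((a i - a j)^2)^2"
      by (simp add: algebra_simps)
  qed
  also have "\<dots> = (2 * V^3) * (\<Sum>i<k. \<Sum>j<k. (a i - a j) * (x j - x i)) + (9/2 * V^2) * (\<Sum>i<k. \<Sum>j<k. (a i - a j)^2)
      + 5/2 * (\<Sum>i<k. \<Sum>j<k. (a i - a j)^4)"
    by (simp only: sum.distrib sum_distrib_left[symmetric] power_mult[symmetric] numeral_times_numeral semiring_norm)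
  also have "\<dots> \<le> (2 * V^3) * (- 2 * real k * V) + (9/2 * V^2) * (2 * real k * sqn k a) + 5/2 * (16 * real k * (sqn k a)^2)"
    unfolding I1[OF x a0, folded V_def] sumdiff2[OF a0] using sumdiff4[where k=k and a=a] by simp
  also have "\<dots> = - 4 * real k * V^4 + 9 * real k * sqn k a * V^2 + 40 * real k * (sqn k a)^2"
    by (simp add: algebra_simps power2_eq_square power3_eq_cube power4_eq_xxxx)
  finally show ?thesis unfolding V_def .
qed

lemma aux: fixes S4 S2 N P kk :: real assumes "4*kk*S4 \<le> 9*kk*P*S2 + N*(40*kk*P^2)" "9*kk*P*S2 \<le> 9*kk*P*(N*P/2)" "0<kk" "0\<le>N" "0\<le>P" shows "S4 \<le> 12*N*P^2"
proof -
  define W X Y where "W = kk*S4" and "X = kk*P*S2" and "Y = kk*(N*P^2)"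
  have a1: "4*W \<le> 9*X + 40*Y" unfolding W_def X_def Y_def using assms(1) by (simp add: algebra_simps)
  have a2: "X \<le> Y/2" unfolding X_def Y_def using assms(2) by (simp add: algebra_simps power2_eq_square)
  have "0 \<le> Y" unfolding Y_def using assms by simp
  with a1 a2 have "W \<le> 12 * Y" by linarith
  then have "S4 * kk \<le> (12*N*P^2) * kk" unfolding W_def Y_def by (simp add: algebra_simps)
  then show ?thesis using assms(3) by simp
qed

lemma M4:
  assumes ev: "even k" and k2: "2 \<le> k" and a0: "(\<Sum>i<k. a i) = 0"
  shows "(\<Sum>x\<in>balanced_vecs k. (lin k a x)^4) \<le> 12 * real (card (balanced_vecs k)) * (sqn k a)^2"
proof -
  let ?S4 = "(\<Sum>x\<in>balanced_vecs k. (lin k a x)^4)" and ?S2 = "(\<Sum>x\<in>balanced_vecs k. (lin k a x)^2)"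
    and ?N = "real (card (balanced_vecs k))" and ?P = "sqn k a"
  have "0 = (\<Sum>x\<in>balanced_vecs k. \<Sum>i<k. \<Sum>j<k. ((a i - a j) * (x j - x i)) *
     ((\<lambda>w. w^3) (lin k a x + (a i - a j) * (x j - x i)) + (\<lambda>w. w^3) (lin k a x)))"
    by (rule exch_all[symmetric])
  also have "\<dots> \<le> (\<Sum>x\<in>balanced_vecs k. - 4 * real k * (lin k a x)^4 + 9 * real k * ?P * (lin k a x)^2 + 40 * real k * ?P^2)"
    by (rule sum_mono, erule pt4[OF _ a0])
  also have "\<dots> = - 4 * real k * ?S4 + 9 * real k * ?P * ?S2 + ?N * (40 * real k * ?P^2)"
    by (simp add: sum.distrib sum_distrib_left sum_subtractf sum_negf)
  finally have h: "4 * real k * ?S4 \<le> 9 * real k * ?P * ?S2 + ?N * (40 * real k * ?P^2)" by linarith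
  have "9 * real k * ?P * ?S2 \<le> 9 * real k * ?P * (?N * ?P / 2)"
    using M2le[OF ev k2 a0] sqn_nonneg[of k a] by (intro mult_left_mono) auto
  from aux[OF h this] show ?thesis using k2 sqn_nonneg[of k a] by simp
qed



lemma Zlin: "bilin_Z k \<delta> x y = lin k (\<lambda>i. \<Sum>j<k. \<delta> i j * y j) x"
  unfolding bilin_Z_def lin_def
  by (rule sum.cong[OF refl]) (simp add: sum_distrib_left sum_distrib_right mult_ac)

lemma bsum0:
  fixes \<delta> :: "nat \<Rightarrow> nat \<Rightarrow> real"
  assumes "\<forall>j0<k. (\<Sum>i<k. \<delta> i j0) = 0"
  shows "(\<Sum>i<k. \<Sum>j<k. \<delta> i j * y j) = 0"
proof -
  have "(\<Sum>i<k. \<Sum>j<k. \<delta> i j * y j) = (\<Sum>j<k. \<Sum>i<k. \<delta> i j * y j)" by (rule sum.swap)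
  also have "\<dots> = (\<Sum>j<k. (\<Sum>i<k. \<delta> i j) * y j)" by (simp add: sum_distrib_right)
  also have "\<dots> = 0" using assms by simp
  finally show ?thesis .
qed

lemma sqn_b: "sqn k (\<lambda>i. \<Sum>j<k. \<delta> i j * y j) = (\<Sum>i<k. (lin k (\<delta> i) y)^2)"
  by (simp add: sqn_def lin_def)

lemma frob_sqn: "frob_sq k \<delta> = (\<Sum>i<k. sqn k (\<delta> i))"
  by (simp add: frob_sq_def sqn_def)

lemma E2:
  assumes ev: "even k" and k2: "2 \<le> k"
    and rows: "\<forall>i0<k. (\<Sum>j<k. \<delta> i0 j) = 0" and cols: "\<forall>j0<k. (\<Sum>i<k. \<delta> i j0) = 0"
  shows "(\<Sum>y\<in>balanced_vecs k. \<Sum>x\<in>balanced_vecs k. (bilin_Z k \<delta> x y)^2) * (4 * real k - 4)^2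
     = (real (card (balanced_vecs k)))^2 * (real k)^2 * frob_sq k \<delta>"
proof -
  let ?B = "balanced_vecs k" and ?N = "real (card (balanced_vecs k))" and ?c = "4 * real k - 4"
  define q where "q y = sqn k (\<lambda>i. \<Sum>j<k. \<delta> i j * y j)" for y
  have h1: "(\<Sum>x\<in>?B. (bilin_Z k \<delta> x y)^2) * ?c = ?N * (real k * q y)" for y
    unfolding Zlin q_def by (rule M2[OF ev bsum0[OF cols]])
  have "(\<Sum>y\<in>?B. \<Sum>x\<in>?B. (bilin_Z k \<delta> x y)^2) * ?c = (\<Sum>y\<in>?B. (\<Sum>x\<in>?B. (bilin_Z k \<delta> x y)^2) * ?c)"
    by (rule sum_distrib_right)
  also have "\<dots> = (\<Sum>y\<in>?B. ?N * (real k * q y))"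
    by (rule sum.cong[OF refl], rule h1)
  also have "\<dots> = ?N * real k * (\<Sum>y\<in>?B. q y)" by (simp only: sum_distrib_left[symmetric] mult.assoc)
  finally have s1: "(\<Sum>y\<in>?B. \<Sum>x\<in>?B. (bilin_Z k \<delta> x y)^2) * ?c = ?N * real k * (\<Sum>y\<in>?B. q y)" .
  have "(\<Sum>y\<in>?B. q y) = (\<Sum>y\<in>?B. \<Sum>i<k. (lin k (\<delta> i) y)^2)" unfolding q_def sqn_b ..
  also have "\<dots> = (\<Sum>i<k. \<Sum>y\<in>?B. (lin k (\<delta> i) y)^2)" by (rule sum.swap)
  finally have "(\<Sum>y\<in>?B. q y) * ?c = (\<Sum>i<k. (\<Sum>y\<in>?B. (lin k (\<delta> i) y)^2) * ?c)"
    by (simp add: sum_distrib_right)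
  also have "\<dots> = (\<Sum>i<k. ?N * (real k * sqn k (\<delta> i)))"
  proof (rule sum.cong[OF refl])
    fix i assume "i \<in> {..<k}"
    then have "(\<Sum>j<k. \<delta> i j) = 0" using rows by auto
    then show "(\<Sum>y\<in>?B. (lin k (\<delta> i) y)^2) * ?c = ?N * (real k * sqn k (\<delta> i))"
      by (rule M2[OF ev])
  qed
  also have "\<dots> = ?N * real k * frob_sq k \<delta>" by (simp add: frob_sqn sum_distrib_left mult_ac)
  finally have s2: "(\<Sum>y\<in>?B. q y) * ?c = ?N * real k * frob_sq k \<delta>" .
  have "(\<Sum>y\<in>?B. \<Sum>x\<in>?B. (bilin_Z k \<delta> x y)^2) * ?c^2 = ?N * real k * ((\<Sum>y\<in>?B. q y) * ?c)"
    using s1 by (simp add: power2_eq_square mult_ac)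
  also have "\<dots> = ?N^2 * (real k)^2 * frob_sq k \<delta>" unfolding s2 by (simp add: power2_eq_square mult_ac)
  finally show ?thesis .
qed

lemma cs_step:
  assumes ev: "even k" and k2: "2 \<le> k"
    and r1: "(\<Sum>j<k. u j) = 0" and r2: "(\<Sum>j<k. v j) = 0"
  shows "(\<Sum>y\<in>balanced_vecs k. (lin k u y)^2 * (lin k v y)^2)
     \<le> 12 * real (card (balanced_vecs k)) * sqn k u * sqn k v"
proof -
  let ?B = "balanced_vecs k" and ?N = "real (card (balanced_vecs k))"
  have "(\<Sum>y\<in>?B. (lin k u y)^2 * (lin k v y)^2)^2 \<le> (\<Sum>y\<in>?B. ((lin k u y)^2)^2) * (\<Sum>y\<in>?B. ((lin k v y)^2)^2)"
    by (rule Cauchy_Schwarz_ineq_sum)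
  also have "\<dots> \<le> (12 * ?N * (sqn k u)^2) * (12 * ?N * (sqn k v)^2)"
  proof (rule mult_mono)
    show "(\<Sum>y\<in>?B. ((lin k u y)^2)^2) \<le> 12 * ?N * (sqn k u)^2"
      using M4[OF ev k2 r1] by (simp add: power_mult[symmetric])
    show "(\<Sum>y\<in>?B. ((lin k v y)^2)^2) \<le> 12 * ?N * (sqn k v)^2"
      using M4[OF ev k2 r2] by (simp add: power_mult[symmetric])
    show "0 \<le> 12 * ?N * (sqn k u)^2" by simp
    show "0 \<le> (\<Sum>y\<in>?B. ((lin k v y)^2)^2)" by (intro sum_nonneg) simp
  qed
  also have "\<dots> = (12 * ?N * sqn k u * sqn k v)^2" by (simp add: power2_eq_square mult_ac)
  finally show ?thesis
    by (rule power2_le_imp_le) (simp add: sqn_nonneg)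
qed

lemma E4:
  assumes ev: "even k" and k2: "2 \<le> k"
    and rows: "\<forall>i0<k. (\<Sum>j<k. \<delta> i0 j) = 0" and cols: "\<forall>j0<k. (\<Sum>i<k. \<delta> i j0) = 0"
  shows "(\<Sum>y\<in>balanced_vecs k. \<Sum>x\<in>balanced_vecs k. (bilin_Z k \<delta> x y)^4)
     \<le> 144 * (real (card (balanced_vecs k)))^2 * (frob_sq k \<delta>)^2"
proof -
  let ?B = "balanced_vecs k" and ?N = "real (card (balanced_vecs k))"
  define w where "w i y = (lin k (\<delta> i) y)^2" for i y
  have "(\<Sum>y\<in>?B. \<Sum>x\<in>?B. (bilin_Z k \<delta> x y)^4) \<le> (\<Sum>y\<in>?B. 12 * ?N * (\<Sum>i<k. w i y)^2)"
    by (rule sum_mono) (unfold Zlin w_def sqn_b[symmetric], rule M4[OF ev k2 bsum0[OF cols]])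
  also have "\<dots> = 12 * ?N * (\<Sum>y\<in>?B. \<Sum>i<k. \<Sum>i'<k. w i y * w i' y)"
  proof -
    have sq: "(\<Sum>i<k. w i y)^2 = (\<Sum>i<k. \<Sum>i'<k. w i y * w i' y)" for y
      by (simp add: power2_eq_square sum_product)
    show ?thesis unfolding sq by (rule sum_distrib_left[symmetric])
  qed
  also have "\<dots> = 12 * ?N * (\<Sum>i<k. \<Sum>i'<k. \<Sum>y\<in>?B. w i y * w i' y)"
    by (rule arg_cong[where f="\<lambda>t. 12 * ?N * t"], rule swap3[symmetric])
  also have "\<dots> \<le> 12 * ?N * (\<Sum>i<k. \<Sum>i'<k. 12 * ?N * sqn k (\<delta> i) * sqn k (\<delta> i'))"
  proof (intro mult_left_mono sum_mono)
    fix i i' assume "i \<in> {..<k}" "i' \<in> {..<k}"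
    then show "(\<Sum>y\<in>?B. w i y * w i' y) \<le> 12 * ?N * sqn k (\<delta> i) * sqn k (\<delta> i')"
      unfolding w_def using rows by (intro cs_step[OF ev k2]) auto
  qed simp
  also have "\<dots> = 12 * ?N * (12 * ?N * ((\<Sum>i<k. sqn k (\<delta> i)) * (\<Sum>i'<k. sqn k (\<delta> i'))))"
    unfolding sum_product by (simp add: sum_distrib_left mult.assoc)
  also have "\<dots> = 144 * ?N^2 * (frob_sq k \<delta>)^2"
    unfolding frob_sqn[symmetric] by (simp add: power2_eq_square)
  finally show ?thesis .
qed



lemma pair_pmf_of_set_eq:
  assumes "finite A" "A \<noteq> {}"
  shows "pair_pmf (pmf_of_set A) (pmf_of_set A) = pmf_of_set (A \<times> A)"
proof (rule pmf_eqI)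
  fix p :: "'a \<times> 'a"
  obtain a b where p: "p = (a, b)" by (cases p)
  have "finite (A \<times> A)" "A \<times> A \<noteq> {}" using assms by auto
  then show "pmf (pair_pmf (pmf_of_set A) (pmf_of_set A)) p = pmf (pmf_of_set (A \<times> A)) p"
    using assms unfolding p by (simp add: pmf_pair indicator_times card_cartesian_product)
qed

lemma pt_bound:
  fixes v c1 c2 :: real
  assumes "0 \<le> v" "0 < c2" "0 \<le> c1"
  shows "v \<le> c1 + c2 * (if v \<in> {c1..c2} then 1 else 0) + v^2 / c2"
proof (cases "v \<in> {c1..c2}")
  case True
  then have i: "(if v \<in> {c1..c2} then 1 else 0) = (1::real)" by simp
  have "0 \<le> v^2 / c2" using assms by simp
  then show ?thesis unfolding i using assms True[unfolded atLeastAtMost_iff] by linarith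
next
  case False
  then consider "v < c1" | "c2 < v" by fastforce
  then show ?thesis
  proof cases
    case 1
    have i: "(if v \<in> {c1..c2} then 1 else 0) = (0::real)" using False by simp
    have "0 \<le> v^2 / c2" using assms by simp
    then show ?thesis unfolding i using 1 by linarith
  next
    case 2
    then have "v * c2 \<le> v * v" using assms by (intro mult_left_mono) auto
    then have "v \<le> v^2 / c2" using assms by (simp add: field_simps power2_eq_square)
    then show ?thesis using False assms 2 by simp
  qed
qed



lemma key:
  fixes k :: nat and \<delta> :: "nat \<Rightarrow> nat \<Rightarrow> real"
  assumes ev: "even k" and k2: "2 \<le> k" and nz: "\<exists>i<k. \<exists>j<k. \<delta> i j \<noteq> 0"
    and rows: "\<forall>i0<k. (\<Sum>j<k. \<delta> i0 j) = 0" and cols: "\<forall>j0<k. (\<Sum>i<k. \<delta> i j0) = 0"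
  shows "measure_pmf.prob (pair_pmf (pmf_of_set (balanced_vecs k)) (pmf_of_set (balanced_vecs k)))
         {(x, y). (bilin_Z k \<delta> x y)^2 / frob_sq k \<delta> \<in> {1/32..9216}} \<ge> 1/589824"
proof -
  let ?B = "balanced_vecs k"
  define N where "N = real (card ?B)"
  define F where "F = frob_sq k \<delta>"
  define Zf where "Zf x y = bilin_Z k \<delta> x y" for x y
  define S where "S = {(x, y). (bilin_Z k \<delta> x y)^2 / frob_sq k \<delta> \<in> {1/32..9216::real}}"
  define C where "C = (\<Sum>y\<in>?B. \<Sum>x\<in>?B. (if (Zf x y)^2 / F \<in> {1/32..9216::real} then 1 else 0::real))"
  have fin: "finite ?B" by (rule finite_bal)
  have ne: "?B \<noteq> {}" by (rule bal_ne)
  have Npos: "0 < N" unfolding N_def using fin ne by (simp add: card_gt_0_iff)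
  have Fpos: "0 < F"
  proof -
    obtain i j where ij: "i < k" "j < k" "\<delta> i j \<noteq> 0" using nz by blast
    have h0: "0 < (\<Sum>j'<k. (\<delta> i j')^2)"
      by (rule sum_pos2[where I="{..<k}" and i=j and f="\<lambda>j'. (\<delta> i j')^2"]) (use ij in auto)
    have "0 < (\<Sum>i'<k. \<Sum>j'<k. (\<delta> i' j')^2)"
      by (rule sum_pos2[where I="{..<k}" and i=i and f="\<lambda>i'. \<Sum>j'<k. (\<delta> i' j')^2"])
        (use ij h0 in \<open>auto intro: sum_nonneg\<close>)
    then show ?thesis unfolding F_def frob_sq_def .
  qed
  have prob: "measure_pmf.prob (pair_pmf (pmf_of_set ?B) (pmf_of_set ?B)) S = C / N^2"
  proof -
    have "measure_pmf.prob (pair_pmf (pmf_of_set ?B) (pmf_of_set ?B)) S = real (card ((?B \<times> ?B) \<inter> S)) / real (card (?B \<times> ?B))"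
      unfolding pair_pmf_of_set_eq[OF fin ne] using fin ne by (simp add: measure_pmf_of_set)
    also have "real (card (?B \<times> ?B)) = N^2" unfolding N_def card_cartesian_product by (simp add: power2_eq_square)
    also have "real (card ((?B \<times> ?B) \<inter> S)) = C"
    proof -
      have "(?B \<times> ?B) \<inter> S = {p \<in> ?B \<times> ?B. p \<in> S}" by auto
      then have "real (card ((?B \<times> ?B) \<inter> S)) = (\<Sum>p\<in>{p \<in> ?B \<times> ?B. p \<in> S}. 1)" by simp
      also have "\<dots> = (\<Sum>p\<in>?B \<times> ?B. if p \<in> S then 1 else 0)"
        by (rule sum.inter_filter) (use fin in simp)
      also have "\<dots> = (\<Sum>x\<in>?B. \<Sum>y\<in>?B. if (x, y) \<in> S then 1 else 0)"
        by (simp add: sum.cartesian_product)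
      also have "\<dots> = (\<Sum>y\<in>?B. \<Sum>x\<in>?B. if (x, y) \<in> S then 1 else 0)"
        by (rule sum.swap)
      also have "\<dots> = C" unfolding C_def S_def Zf_def F_def by simp
      finally show ?thesis .
    qed
    finally show ?thesis .
  qed
  have c0: "0 < 4 * real k - 4" using k2 by simp
  have sV: "(\<Sum>y\<in>?B. \<Sum>x\<in>?B. (Zf x y)^2 / F) = N^2 * (real k)^2 / (4 * real k - 4)^2"
  proof -
    have "(\<Sum>y\<in>?B. \<Sum>x\<in>?B. (Zf x y)^2 / F) = (\<Sum>y\<in>?B. \<Sum>x\<in>?B. (Zf x y)^2) / F"
      by (simp add: sum_divide_distrib)
    also have "(\<Sum>y\<in>?B. \<Sum>x\<in>?B. (Zf x y)^2) = N^2 * (real k)^2 * F / (4 * real k - 4)^2"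
      using E2[OF ev k2 rows cols] c0 unfolding Zf_def N_def F_def by (simp add: field_simps)
    finally show ?thesis using Fpos by simp
  qed
  have sV2: "(\<Sum>y\<in>?B. \<Sum>x\<in>?B. ((Zf x y)^2 / F)^2) \<le> 144 * N^2"
  proof -
    have "(\<Sum>y\<in>?B. \<Sum>x\<in>?B. ((Zf x y)^2 / F)^2) = (\<Sum>y\<in>?B. \<Sum>x\<in>?B. (Zf x y)^4) / F^2"
      by (simp add: sum_divide_distrib power_divide power_mult[symmetric])
    also have "\<dots> \<le> (144 * N^2 * F^2) / F^2"
      using E4[OF ev k2 rows cols] Fpos unfolding Zf_def N_def F_def
      by (intro divide_right_mono) auto
    also have "\<dots> = 144 * N^2" using Fpos by simp
    finally show ?thesis .
  qed
  have ratio: "1/16 \<le> (real k)^2 / (4 * real k - 4)^2"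
  proof -
    have "(4 * real k - 4)^2 \<le> (4 * real k)^2" using c0 by (intro power_mono) auto
    then have "(4 * real k - 4)^2 \<le> 16 * (real k)^2" by (simp add: power_mult_distrib)
    then show ?thesis using c0 by (simp add: field_simps)
  qed
  have "(\<Sum>y\<in>?B. \<Sum>x\<in>?B. (Zf x y)^2 / F)
     \<le> (\<Sum>y\<in>?B. \<Sum>x\<in>?B. 1/32 + 9216 * (if (Zf x y)^2 / F \<in> {1/32..9216::real} then 1 else 0) + ((Zf x y)^2 / F)^2 / 9216)"
    by (intro sum_mono pt_bound) (use Fpos in auto)
  also have "\<dots> = N * N / 32 + 9216 * C + (\<Sum>y\<in>?B. \<Sum>x\<in>?B. ((Zf x y)^2 / F)^2) / 9216"
    unfolding C_def N_def by (simp add: sum.distrib sum_distrib_left sum_divide_distrib)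
  finally have "N^2 * (real k)^2 / (4 * real k - 4)^2 \<le> N * N / 32 + 9216 * C + (\<Sum>y\<in>?B. \<Sum>x\<in>?B. ((Zf x y)^2 / F)^2) / 9216"
    unfolding sV .
  moreover have "N^2 / 16 \<le> N^2 * (real k)^2 / (4 * real k - 4)^2"
  proof -
    have "N^2 * (1/16) \<le> N^2 * ((real k)^2 / (4 * real k - 4)^2)" by (rule mult_left_mono[OF ratio]) simp
    then show ?thesis by simp
  qed
  ultimately have "N^2 / 16 \<le> N^2 / 32 + 9216 * C + N^2 / 64"
    using sV2 by (simp add: power2_eq_square)
  then have "N^2 / 589824 \<le> C" by simp
  then have "1/589824 \<le> C / N^2" using Npos by (simp add: field_simps)
  then show ?thesis using prob unfolding S_def by simp
qed


theorem theorem6p6: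
  shows "\<exists>c1 c2 \<rho>::real. 0 < c1 \<and> c1 \<le> c2 \<and> 0 < \<rho> \<and>
    (\<forall>(k::nat) (\<delta>::nat \<Rightarrow> nat \<Rightarrow> real).
       even k \<longrightarrow> 2 \<le> k \<longrightarrow>
       (\<exists>i<k. \<exists>j<k. \<delta> i j \<noteq> 0) \<longrightarrow>
       (\<forall>i0<k. (\<Sum>j<k. \<delta> i0 j) = 0) \<longrightarrow>
       (\<forall>j0<k. (\<Sum>i<k. \<delta> i j0) = 0) \<longrightarrow>
       measure_pmf.prob (pair_pmf (pmf_of_set (balanced_vecs k)) (pmf_of_set (balanced_vecs k)))
         {(x, y). (bilin_Z k \<delta> x y)^2 / frob_sq k \<delta> \<in> {c1..c2}} \<ge> \<rho>)"
proof (rule exI[where x="1/32"], rule exI[where x="9216"], rule exI[where x="1/589824"], intro conjI allI impI)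
  fix k :: nat and \<delta> :: "nat \<Rightarrow> nat \<Rightarrow> real"
  assume "even k" "2 \<le> k" "\<exists>i<k. \<exists>j<k. \<delta> i j \<noteq> 0"
    "\<forall>i0<k. (\<Sum>j<k. \<delta> i0 j) = 0" "\<forall>j0<k. (\<Sum>i<k. \<delta> i j0) = 0"
  then show "measure_pmf.prob (pair_pmf (pmf_of_set (balanced_vecs k)) (pmf_of_set (balanced_vecs k)))
         {(x, y). (bilin_Z k \<delta> x y)^2 / frob_sq k \<delta> \<in> {1/32..9216}} \<ge> 1/589824"
    by (rule key)
qed simp_all

end
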